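(* Let $G$ be a finite simple undirected graph with $n$ vertices, $m$ edges, $k$ connected components, and let $c_1$ denote the number of induced cycles of $G$ whose length is congruent to $1$ modulo $3$. Then $$\mathrm{diss}(G)\;\geq\; n-\frac{1}{3}\big(m+k+c_1\big).$$
   Context: A set $D$ of vertices of a graph $G$ is a dissociation set if the subgraph $G[D]$ induced by $D$ has maximum degree at most $1$. The dissociation number $\mathrm{diss}(G)$ is the maximum cardinality of a dissociation set of $G$. An induced cycle of $G$ is a cycle subgraph $C$ of $G$ (of length at least $3$) such that $G[V(C)]=C$; $c_1$ counts such subgraphs of length $\ell\equiv 1 \pmod 3$. *)

theory Defs
  imports Complex_Main
begin

definition simple_graph :: "'a set \<Rightarrow> ('a \<Rightarrow> 'a \<Rightarrow> bool) \<Rightarrow> bool" where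
  "simple_graph V E \<longleftrightarrow> finite V \<and> (\<forall>u v. E u v \<longrightarrow> u \<in> V \<and> v \<in> V)
     \<and> (\<forall>u v. E u v \<longrightarrow> E v u) \<and> (\<forall>v. \<not> E v v)"

definition edges :: "('a \<Rightarrow> 'a \<Rightarrow> bool) \<Rightarrow> 'a set set" where
  "edges E = {{u, v} | u v. E u v}"

definition num_edges :: "('a \<Rightarrow> 'a \<Rightarrow> bool) \<Rightarrow> nat" where
  "num_edges E = card (edges E)"

definition reach :: "'a set \<Rightarrow> ('a \<Rightarrow> 'a \<Rightarrow> bool) \<Rightarrow> ('a \<times> 'a) set" where
  "reach V E = {(u, v). u \<in> V \<and> v \<in> V \<and> (\<lambda>x y. E x y \<and> x \<in> V \<and> y \<in> V)\<^sup>*\<^sup>* u v}"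

definition num_components :: "'a set \<Rightarrow> ('a \<Rightarrow> 'a \<Rightarrow> bool) \<Rightarrow> nat" where
  "num_components V E = card (V // reach V E)"

definition dissociation_set :: "'a set \<Rightarrow> ('a \<Rightarrow> 'a \<Rightarrow> bool) \<Rightarrow> 'a set \<Rightarrow> bool" where
  "dissociation_set V E D \<longleftrightarrow> D \<subseteq> V \<and> (\<forall>v\<in>D. card {u\<in>D. E v u} \<le> 1)"

definition diss :: "'a set \<Rightarrow> ('a \<Rightarrow> 'a \<Rightarrow> bool) \<Rightarrow> nat" where
  "diss V E = Max {card D | D. dissociation_set V E D}"

text \<open>Since an induced cycle C
  satisfies G[V(C)] = C, it is determined by its vertex set.\<close>
definition induced_cycle_set :: "'a set \<Rightarrow> ('a \<Rightarrow> 'a \<Rightarrow> bool) \<Rightarrow> 'a set \<Rightarrow> bool" where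
  "induced_cycle_set V E S \<longleftrightarrow> S \<subseteq> V \<and>
     (\<exists>vs. distinct vs \<and> length vs \<ge> 3 \<and> set vs = S \<and>
        (\<forall>i<length vs. \<forall>j<length vs.
           E (vs ! i) (vs ! j) \<longleftrightarrow> (j = Suc i mod length vs \<or> i = Suc j mod length vs)))"

definition c1 :: "'a set \<Rightarrow> ('a \<Rightarrow> 'a \<Rightarrow> bool) \<Rightarrow> nat" where
  "c1 V E = card {S. induced_cycle_set V E S \<and> card S mod 3 = 1}"

end

theory Submission imports Defs begin


definition nb :: "('a \<Rightarrow> 'a \<Rightarrow> bool) \<Rightarrow> 'a \<Rightarrow> 'a set" where
  "nb E v = {u. E v u}"

definition rch :: "('a \<Rightarrow> 'a \<Rightarrow> bool) \<Rightarrow> 'a set \<Rightarrow> 'a \<Rightarrow> 'a \<Rightarrow> bool" where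
  "rch E X = (\<lambda>x y. E x y \<and> x \<in> X \<and> y \<in> X)\<^sup>*\<^sup>*"

definition restr :: "('a \<Rightarrow> 'a \<Rightarrow> bool) \<Rightarrow> 'a set \<Rightarrow> 'a \<Rightarrow> 'a \<Rightarrow> bool" where
  "restr E X = (\<lambda>x y. E x y \<and> x \<in> X \<and> y \<in> X)"

definition sv :: "'a set \<Rightarrow> ('a \<Rightarrow> 'a \<Rightarrow> bool) \<Rightarrow> nat" where
  "sv V E = num_edges E + num_components V E + c1 V E"

locale sgraph =
  fixes V :: "'a set" and E :: "'a \<Rightarrow> 'a \<Rightarrow> bool"
  assumes sg: "simple_graph V E"
begin

lemma finV: "finite V" using sg by (simp add: simple_graph_def)
lemma inV1: "E u v \<Longrightarrow> u \<in> V" using sg by (simp add: simple_graph_def)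
lemma inV2: "E u v \<Longrightarrow> v \<in> V" using sg by (simp add: simple_graph_def)
lemma symE: "E u v \<Longrightarrow> E v u" using sg by (simp add: simple_graph_def)
lemma irr: "\<not> E v v" using sg by (simp add: simple_graph_def)
lemma neq: "E u v \<Longrightarrow> u \<noteq> v" using irr by auto

lemma nb_sub: "nb E v \<subseteq> V" using inV2 by (auto simp: nb_def)
lemma fin_nb: "finite (nb E v)" using nb_sub finV finite_subset by blast

lemma rch_in: "rch E X x y \<Longrightarrow> x \<in> X \<Longrightarrow> y \<in> X"
  unfolding rch_def by (induction rule: rtranclp_induct) auto

lemma rch_sym: "rch E X x y \<Longrightarrow> rch E X y x"
  unfolding rch_def
proof (induction rule: rtranclp_induct)
  case base then show ?case by simp
next
  case (step y z)
  then have "(\<lambda>x y. E x y \<and> x \<in> X \<and> y \<in> X) z y" using symE by auto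
  then show ?case using step(3) by (rule converse_rtranclp_into_rtranclp)
qed

lemma rch_trans: "rch E X x y \<Longrightarrow> rch E X y z \<Longrightarrow> rch E X x z"
  unfolding rch_def by auto

lemma rch_edge: "E x y \<Longrightarrow> x \<in> X \<Longrightarrow> y \<in> X \<Longrightarrow> rch E X x y"
  unfolding rch_def by auto

lemma rch_refl: "rch E X x x" unfolding rch_def by auto

lemma rch_mono: "rch E X x y \<Longrightarrow> X \<subseteq> Y \<Longrightarrow> rch E Y x y"
  unfolding rch_def
  by (induction rule: rtranclp_induct) (auto intro: rtranclp.rtrancl_into_rtrancl)

lemma reach_eq: "reach X E = {(u, v). u \<in> X \<and> v \<in> X \<and> rch E X u v}"
  unfolding reach_def rch_def by simp

lemma reach_restr: "reach X (restr E X) = reach X E"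
  unfolding reach_def restr_def by simp


end

lemma diss_fin: "finite {card D | D. dissociation_set X F D}" if "finite X" for X F
proof -
  have "{card D | D. dissociation_set X F D} \<subseteq> {0..card X}"
    using that by (auto simp: dissociation_set_def intro: card_mono)
  then show ?thesis using finite_subset by blast
qed

lemma diss_ge: "finite X \<Longrightarrow> dissociation_set X F D \<Longrightarrow> card D \<le> diss X F"
  unfolding diss_def using diss_fin by (intro Max_ge) auto

lemma diss_ex: "finite X \<Longrightarrow> \<exists>D. dissociation_set X F D \<and> card D = diss X F"
proof -
  assume f: "finite X"
  have "dissociation_set X F {}" by (simp add: dissociation_set_def)
  then have ne: "{card D | D. dissociation_set X F D} \<noteq> {}" by blast
  show ?thesis unfolding diss_def using Max_in[OF diss_fin[OF f] ne] by auto
qed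

lemma diss_restr: "dissociation_set X (restr E X) D = dissociation_set X E D"
proof (cases "D \<subseteq> X")
  case True
  have "\<And>v. v \<in> D \<Longrightarrow> {u\<in>D. restr E X v u} = {u\<in>D. E v u}" using True by (auto simp: restr_def)
  then show ?thesis unfolding dissociation_set_def using True by auto
next
  case False then show ?thesis by (simp add: dissociation_set_def)
qed

lemma diss_restr2: "diss X (restr E X) = diss X E"
  unfolding diss_def diss_restr ..

lemma ics_restr: "induced_cycle_set X (restr E X) C = induced_cycle_set X E C"
proof -
  have key: "\<And>vs. set vs \<subseteq> X \<Longrightarrow> (\<forall>i<length vs. \<forall>j<length vs. restr E X (vs ! i) (vs ! j) = E (vs ! i) (vs ! j))"
    by (auto simp: restr_def)
  show ?thesis
  proof
    assume "induced_cycle_set X (restr E X) C"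
    then obtain vs where a: "C \<subseteq> X" "distinct vs" "length vs \<ge> 3" "set vs = C" and
      h: "\<forall>i<length vs. \<forall>j<length vs. restr E X (vs ! i) (vs ! j) \<longleftrightarrow> (j = Suc i mod length vs \<or> i = Suc j mod length vs)"
      unfolding induced_cycle_set_def by blast
    have "\<forall>i<length vs. \<forall>j<length vs. E (vs ! i) (vs ! j) \<longleftrightarrow> (j = Suc i mod length vs \<or> i = Suc j mod length vs)"
      using h key[of vs] a by simp
    then show "induced_cycle_set X E C" unfolding induced_cycle_set_def using a by blast
  next
    assume "induced_cycle_set X E C"
    then obtain vs where a: "C \<subseteq> X" "distinct vs" "length vs \<ge> 3" "set vs = C" and
      h: "\<forall>i<length vs. \<forall>j<length vs. E (vs ! i) (vs ! j) \<longleftrightarrow> (j = Suc i mod length vs \<or> i = Suc j mod length vs)"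
      unfolding induced_cycle_set_def by blast
    have "\<forall>i<length vs. \<forall>j<length vs. restr E X (vs ! i) (vs ! j) \<longleftrightarrow> (j = Suc i mod length vs \<or> i = Suc j mod length vs)"
      using h key[of vs] a by simp
    then show "induced_cycle_set X (restr E X) C" unfolding induced_cycle_set_def using a by blast
  qed
qed

lemma c1_restr: "c1 X (restr E X) = c1 X E"
  unfolding c1_def ics_restr ..

context sgraph begin

lemma sg_sub: "simple_graph (V - S) (restr E (V - S))"
  using sg finV unfolding simple_graph_def restr_def by auto

definition eS :: "'a set \<Rightarrow> nat" where
  "eS S = card {e \<in> edges E. e \<inter> S \<noteq> {}}"

lemma fin_edges: "finite (edges E)"
proof -
  have "edges E \<subseteq> Pow V" using inV1 inV2 by (auto simp: edges_def)
  then show ?thesis using finV finite_subset by blast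
qed

lemma edges_split: "num_edges E = num_edges (restr E (V - S)) + eS S"
proof -
  let ?A = "edges (restr E (V - S))" and ?B = "{e \<in> edges E. e \<inter> S \<noteq> {}}"
  have "?A \<subseteq> edges E" by (auto simp: edges_def restr_def)
  moreover have "e \<in> ?A" if "e \<in> edges E" "e \<inter> S = {}" for e
  proof -
    from that(1) obtain u v where "e = {u, v}" "E u v" by (auto simp: edges_def)
    then have "restr E (V - S) u v" using that(2) inV1 inV2 by (auto simp: restr_def)
    then show ?thesis using \<open>e = {u, v}\<close> by (auto simp: edges_def)
  qed
  ultimately have "edges E = ?A \<union> ?B" by blast
  moreover have "?A \<inter> ?B = {}" by (auto simp: edges_def restr_def)
  moreover have "finite ?A" "finite ?B" using fin_edges \<open>?A \<subseteq> edges E\<close> finite_subset by auto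
  ultimately have "card (edges E) = card ?A + card ?B" using card_Un_disjoint[of ?A ?B] by simp
  then show ?thesis unfolding num_edges_def eS_def .
qed

definition cls :: "'a set \<Rightarrow> 'a \<Rightarrow> 'a set" where
  "cls S y = reach (V - S) E `` {y}"

definition Nout :: "'a set \<Rightarrow> 'a set" where
  "Nout S = {y \<in> V - S. \<exists>v\<in>S. E y v}"

lemma fin_Nout: "finite (Nout S)" unfolding Nout_def using finV by auto

lemma cls_eq: "rch E (V - S) y z \<Longrightarrow> cls S y = cls S z"
  unfolding cls_def reach_eq using rch_sym rch_trans rch_in by blast

lemma comp_bound:
  assumes "S \<subseteq> V" "S \<noteq> {}"
  shows "num_components (V - S) E + 1 \<le> num_components V E + card (cls S ` Nout S)"
proof -
  let ?R = "reach V E" and ?R' = "reach (V - S) E"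
  let ?A = "{Q \<in> (V - S) // ?R'. \<exists>u\<in>Q. \<exists>v\<in>S. E u v}"
  let ?B = "(V - S) // ?R' - ?A"
  obtain v0 where v0: "v0 \<in> S" using assms by auto
  have finq: "finite ((V - S) // ?R')" by (rule finite_quotient) (auto simp: finV reach_def)
  have finq2: "finite (V // ?R)" by (rule finite_quotient) (auto simp: finV reach_def)
  have AB: "card ((V - S) // ?R') \<le> card ?B + card ?A"
  proof -
    have "(V - S) // ?R' \<subseteq> ?B \<union> ?A" by auto
    then have "card ((V - S) // ?R') \<le> card (?B \<union> ?A)" using finq by (intro card_mono) auto
    also have "\<dots> \<le> card ?B + card ?A" by (rule card_Un_le)
    finally show ?thesis .
  qed
  have Bsub: "?B \<subseteq> V // ?R - {?R `` {v0}}"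
  proof
    fix Q assume Q: "Q \<in> ?B"
    then obtain x where x: "Q = ?R' `` {x}" "x \<in> V - S" by (auto elim: quotientE)
    have noedge: "\<And>u v. u \<in> Q \<Longrightarrow> v \<in> S \<Longrightarrow> \<not> E u v" using Q by blast
    have "?R `` {x} \<subseteq> Q"
    proof
      fix y assume "y \<in> ?R `` {x}"
      then have "rch E V x y" by (auto simp: reach_eq)
      then have "rch E (V - S) x y"
        unfolding rch_def
      proof (induction rule: rtranclp_induct)
        case base then show ?case by simp
      next
        case (step y z)
        have "rch E (V - S) x y" using step(3) by (simp add: rch_def)
        then have "y \<in> Q" "y \<in> V - S" using x rch_in by (auto simp: reach_eq)
        then have "z \<notin> S" using noedge step(2) by blast
        then show ?case using step \<open>y \<in> V - S\<close> by (auto intro: rtranclp.rtrancl_into_rtrancl)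
      qed
      then show "y \<in> Q" using x rch_in by (auto simp: reach_eq)
    qed
    moreover have "Q \<subseteq> ?R `` {x}" using x rch_mono by (auto simp: reach_eq)
    ultimately have "Q = ?R `` {x}" by blast
    moreover have "v0 \<in> ?R `` {v0}" using v0 assms rch_refl by (auto simp: reach_eq)
    moreover have "v0 \<notin> Q" using x v0 by (auto simp: reach_eq)
    ultimately show "Q \<in> V // ?R - {?R `` {v0}}" using x by (auto intro: quotientI)
  qed
  have "v0 \<in> V" using v0 assms by auto
  then have "?R `` {v0} \<in> V // ?R" by (rule quotientI)
  have "card ?B \<le> card (V // ?R - {?R `` {v0}})" using Bsub finq2 by (intro card_mono) auto
  also have "\<dots> = card (V // ?R) - 1" using \<open>?R `` {v0} \<in> V // ?R\<close> by simp
  finally have "card ?B \<le> card (V // ?R) - 1" .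
  moreover have "card (V // ?R) \<ge> 1" using \<open>?R `` {v0} \<in> V // ?R\<close> finq2
    using card_0_eq by fastforce
  moreover have "?A \<subseteq> cls S ` Nout S"
  proof
    fix Q assume "Q \<in> ?A"
    then obtain x u v where x: "Q = ?R' `` {x}" "x \<in> V - S" and u: "u \<in> Q" "v \<in> S" "E u v"
      by (auto elim: quotientE)
    then have "rch E (V - S) x u" "u \<in> V - S" by (auto simp: reach_eq)
    then have "Q = cls S u" using x cls_eq[of S x u] by (simp add: cls_def)
    moreover have "u \<in> Nout S" using u \<open>u \<in> V - S\<close> by (auto simp: Nout_def)
    ultimately show "Q \<in> cls S ` Nout S" by blast
  qed
  then have "card ?A \<le> card (cls S ` Nout S)" using fin_Nout by (intro card_mono) auto
  ultimately show ?thesis using AB unfolding num_components_def by linarith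
qed


lemma ics_mono: "induced_cycle_set X E C \<Longrightarrow> X \<subseteq> Y \<Longrightarrow> induced_cycle_set Y E C"
  unfolding induced_cycle_set_def by blast

lemma ics_ne: "induced_cycle_set X E C \<Longrightarrow> C \<noteq> {}"
  unfolding induced_cycle_set_def by auto

definition credit :: "'a set \<Rightarrow> nat" where
  "credit S = (if \<exists>C \<subseteq> S. induced_cycle_set V E C \<and> card C mod 3 = 1 then 1 else 0)"

lemma c1_bound:
  assumes "S \<subseteq> V"
  shows "c1 (V - S) E + credit S \<le> c1 V E"
proof -
  let ?F = "\<lambda>X. {C. induced_cycle_set X E C \<and> card C mod 3 = 1}"
  have sub: "?F (V - S) \<subseteq> ?F V" using ics_mono by blast
  have fin: "finite (?F V)"
  proof -
    have "?F V \<subseteq> Pow V" by (auto simp: induced_cycle_set_def)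
    then show ?thesis using finV finite_subset by blast
  qed
  show ?thesis
  proof (cases "\<exists>C \<subseteq> S. induced_cycle_set V E C \<and> card C mod 3 = 1")
    case True
    then obtain C0 where C0: "C0 \<subseteq> S" "induced_cycle_set V E C0" "card C0 mod 3 = 1" by blast
    have "C0 \<notin> ?F (V - S)"
    proof
      assume "C0 \<in> ?F (V - S)"
      then have "C0 \<subseteq> V - S" by (auto simp: induced_cycle_set_def)
      then show False using C0 ics_ne by blast
    qed
    then have "?F (V - S) \<subseteq> ?F V - {C0}" using sub by blast
    then have "card (?F (V - S)) \<le> card (?F V - {C0})" using fin by (intro card_mono) auto
    moreover have "C0 \<in> ?F V" using C0 by blast
    then have "card (?F V - {C0}) = card (?F V) - 1" "card (?F V) \<ge> 1"
      using fin by (auto simp: Suc_le_eq card_gt_0_iff)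
    ultimately show ?thesis using True unfolding c1_def credit_def by simp
  next
    case False
    then have "credit S = 0" unfolding credit_def by auto
    then show ?thesis unfolding c1_def using sub fin by (simp add: card_mono)
  qed
qed

lemma sv_bound:
  assumes "S \<subseteq> V" "S \<noteq> {}"
  shows "sv (V - S) (restr E (V - S)) + eS S + 1 + credit S \<le> sv V E + card (cls S ` Nout S)"
proof -
  have "num_components (V - S) (restr E (V - S)) = num_components (V - S) E"
    unfolding num_components_def reach_restr ..
  then show ?thesis using edges_split[of S] comp_bound[OF assms] c1_bound[OF assms(1)]
    unfolding sv_def c1_restr by linarith
qed

lemma diss_bound:
  assumes "S \<subseteq> V" "T \<subseteq> S" and cl: "\<forall>v\<in>S - T. \<forall>u. E v u \<longrightarrow> u \<in> S"
    and d1: "\<forall>v\<in>S - T. card {u\<in>S - T. E v u} \<le> 1"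
  shows "diss (V - S) E + card (S - T) \<le> diss V E"
proof -
  have fs: "finite (V - S)" using finV by auto
  obtain D where D: "dissociation_set (V - S) E D" "card D = diss (V - S) E"
    using diss_ex[OF fs] by blast
  let ?D = "D \<union> (S - T)"
  have DV: "D \<subseteq> V - S" using D by (simp add: dissociation_set_def)
  have "dissociation_set V E ?D"
    unfolding dissociation_set_def
  proof (intro conjI ballI)
    show "?D \<subseteq> V" using DV assms by auto
  next
    fix v assume v: "v \<in> ?D"
    show "card {u \<in> ?D. E v u} \<le> 1"
    proof (cases "v \<in> D")
      case True
      have "{u \<in> ?D. E v u} = {u \<in> D. E v u}"
      proof -
        have "\<not> E v u" if "u \<in> S - T" for u
          using cl that True DV symE by blast
        then show ?thesis by auto
      qed
      then show ?thesis using D(1) True by (simp add: dissociation_set_def)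
    next
      case False
      then have vS: "v \<in> S - T" using v by auto
      have "{u \<in> ?D. E v u} = {u \<in> S - T. E v u}" using cl vS DV by auto
      then show ?thesis using d1 vS by simp
    qed
  qed
  then have "card ?D \<le> diss V E" using diss_ge finV by blast
  moreover have "card ?D = card D + card (S - T)"
    using DV finV assms(1) by (intro card_Un_disjoint) (auto intro: finite_subset)
  ultimately show ?thesis using D(2) by simp
qed

definition good :: "'a set \<Rightarrow> 'a set \<Rightarrow> bool" where
  "good S T \<longleftrightarrow> S \<subseteq> V \<and> S \<noteq> {} \<and> T \<subseteq> S \<and> (\<forall>v\<in>S - T. \<forall>u. E v u \<longrightarrow> u \<in> S)
     \<and> (\<forall>v\<in>S - T. card {u\<in>S - T. E v u} \<le> 1)
     \<and> 3 * card T + sv (V - S) (restr E (V - S)) \<le> sv V E"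

lemma mk_good:
  assumes "S \<subseteq> V" "S \<noteq> {}" "T \<subseteq> S" "\<forall>v\<in>S - T. \<forall>u. E v u \<longrightarrow> u \<in> S"
    "\<forall>v\<in>S - T. card {u\<in>S - T. E v u} \<le> 1"
    "3 * card T + card (cls S ` Nout S) \<le> eS S + 1 + credit S"
  shows "good S T"
  using assms sv_bound[OF assms(1,2)] unfolding good_def by linarith

end



lemma card_img_le1: "finite A \<Longrightarrow> a \<in> A \<Longrightarrow> b \<in> A \<Longrightarrow> a \<noteq> b \<Longrightarrow> f a = f b \<Longrightarrow> card (f ` A) + 1 \<le> card A"
proof -
  assume fA: "finite A" and ab: "a \<in> A" "b \<in> A" "a \<noteq> b" "f a = f b"
  have "f ` A \<subseteq> f ` (A - {a})"
  proof
    fix y assume "y \<in> f ` A"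
    then obtain x where x: "x \<in> A" "y = f x" by blast
    show "y \<in> f ` (A - {a})" by (cases "x = a") (use ab x in auto)
  qed
  then have "card (f ` A) \<le> card (f ` (A - {a}))" using fA by (intro card_mono) auto
  also have "\<dots> \<le> card (A - {a})" using fA by (intro card_image_le) auto
  also have "\<dots> = card A - 1" using ab by simp
  finally show ?thesis using ab fA by (metis card_gt_0_iff empty_iff le_diff_conv2 Suc_le_eq One_nat_def add.commute plus_1_eq_Suc)
qed

lemma card_img_le2: "finite A \<Longrightarrow> a \<in> A \<Longrightarrow> b \<in> A \<Longrightarrow> c \<in> A \<Longrightarrow> a \<noteq> b \<Longrightarrow> a \<noteq> c \<Longrightarrow> b \<noteq> c
   \<Longrightarrow> f a = f c \<Longrightarrow> f b = f c \<Longrightarrow> card (f ` A) + 2 \<le> card A"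
proof -
  assume fA: "finite A" and abc: "a \<in> A" "b \<in> A" "c \<in> A" "a \<noteq> b" "a \<noteq> c" "b \<noteq> c" "f a = f c" "f b = f c"
  have "f ` A = f ` (A - {a})"
  proof
    show "f ` A \<subseteq> f ` (A - {a})"
    proof
      fix y assume "y \<in> f ` A"
      then obtain x where x: "x \<in> A" "y = f x" by blast
      show "y \<in> f ` (A - {a})" by (cases "x = a") (use abc x in auto)
    qed
  qed auto
  moreover have "card (f ` (A - {a})) + 1 \<le> card (A - {a})"
    using abc fA by (intro card_img_le1[of _ b c]) auto
  moreover have "card (A - {a}) + 1 = card A" using abc fA
    by (metis One_nat_def Suc_pred add.commute card_Diff_singleton card_gt_0_iff empty_iff plus_1_eq_Suc)
  ultimately show ?thesis by (metis add_le_cancel_right add_2_eq_Suc' add_Suc_right plus_1_eq_Suc)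
qed

lemma card_img_const: "finite A \<Longrightarrow> (\<And>x. x \<in> A \<Longrightarrow> f x = c) \<Longrightarrow> card (f ` A) \<le> 1"
proof -
  assume "\<And>x. x \<in> A \<Longrightarrow> f x = c"
  then have "f ` A \<subseteq> {c}" by auto
  then have "card (f ` A) \<le> card {c}" by (intro card_mono) auto
  then show ?thesis by simp
qed

lemma ar1: "(k::nat) \<ge> i \<Longrightarrow> (k - i) mod 3 = 0 \<Longrightarrow> k = i + 3 * ((k - i) div 3)"
  using div_mult_mod_eq[of "k - i" 3] by linarith
lemma ar2: "(d::nat) mod 3 = 1 \<Longrightarrow> (d - 1) mod 3 = 0"
proof -
  assume "d mod 3 = 1"
  then have "d - 1 = (d div 3) * 3" using div_mult_mod_eq[of d 3] by linarith
  then show ?thesis by simp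
qed
lemma ar3: "(d::nat) mod 3 = 2 \<Longrightarrow> (Suc d) mod 3 = 0" by (simp add: mod_Suc)
lemma card_le1: "X \<subseteq> {a} \<Longrightarrow> card X \<le> 1"
  using card_mono[of "{a}" X] by simp

context sgraph begin

lemma eS_star:
  assumes "v \<in> S" "P \<subseteq> {e \<in> edges E. e \<inter> S \<noteq> {}}" "\<forall>e\<in>P. v \<notin> e"
  shows "card (nb E v) + card P \<le> eS S"
proof -
  let ?st = "(\<lambda>u. {v, u}) ` nb E v"
  have inj: "inj_on (\<lambda>u. {v, u}) (nb E v)" by (auto simp: inj_on_def doubleton_eq_iff nb_def dest: neq)
  have "?st \<subseteq> {e \<in> edges E. e \<inter> S \<noteq> {}}" using assms(1) by (auto simp: nb_def edges_def)
  moreover have "?st \<inter> P = {}" using assms(3) by auto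
  ultimately have "card (?st \<union> P) \<le> eS S" unfolding eS_def using assms(2) fin_edges
    by (intro card_mono) auto
  moreover have "card (?st \<union> P) = card ?st + card P"
  proof -
    have "P \<subseteq> edges E" using assms(2) by blast
    then have "finite P" using fin_edges by (rule finite_subset)
    then show ?thesis using card_Un_disjoint[of ?st P] fin_nb \<open>?st \<inter> P = {}\<close> by auto
  qed
  moreover have "card ?st = card (nb E v)" using inj by (simp add: card_image)
  ultimately show ?thesis by simp
qed

lemma eS_deg: "v \<in> S \<Longrightarrow> card (nb E v) \<le> eS S"
  using eS_star[of v S "{}"] by simp

lemma Nout_le: "Nout S \<subseteq> B \<Longrightarrow> finite B \<Longrightarrow> card (cls S ` Nout S) \<le> card (cls S ` B)"
  by (intro card_mono) auto

definition ispath :: "'a list \<Rightarrow> bool" where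
  "ispath q \<longleftrightarrow> distinct q \<and> (\<forall>p. Suc p < length q \<longrightarrow> E (q ! p) (q ! Suc p))"

lemma path_rch:
  assumes "ispath q" "a \<le> b" "b < length q" "\<forall>k. a \<le> k \<and> k \<le> b \<longrightarrow> q ! k \<in> X"
  shows "rch E X (q ! a) (q ! b)"
  using assms(2-4)
proof (induction b)
  case 0 then show ?case by (simp add: rch_refl)
next
  case (Suc b)
  show ?case
  proof (cases "a = Suc b")
    case True then show ?thesis by (simp add: rch_refl)
  next
    case False
    then have "rch E X (q ! a) (q ! b)" using Suc by auto
    moreover have "E (q ! b) (q ! Suc b)" using assms(1) Suc(3) by (simp add: ispath_def)
    ultimately show ?thesis using Suc(4) False Suc(2) by (meson le_SucI le_Suc_eq order_refl rch_edge rch_trans)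
  qed
qed

lemma path_rch2:
  assumes "ispath q" "a < length q" "b < length q" "\<forall>k. min a b \<le> k \<and> k \<le> max a b \<longrightarrow> q ! k \<in> X"
  shows "rch E X (q ! a) (q ! b)"
proof (cases "a \<le> b")
  case True then show ?thesis using path_rch assms by (simp add: max_def min_def)
next
  case False then show ?thesis using path_rch[of q b a X] assms rch_sym by (simp add: max_def min_def)
qed


lemma qrch:
  assumes "ispath q" "set q \<subseteq> V" "a < length q" "b < length q"
    "\<forall>k. min a b \<le> k \<and> k \<le> max a b \<longrightarrow> q ! k \<notin> X"
  shows "rch E (V - X) (q ! a) (q ! b)"
proof -
  have "\<forall>k. min a b \<le> k \<and> k \<le> max a b \<longrightarrow> q ! k \<in> V - X"
    using assms by (auto simp: max_def min_def split: if_splits)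
  then show ?thesis using path_rch2 assms by blast
qed

lemma qrch1:
  assumes "ispath q" "set q \<subseteq> V" "a < length q" "b < length q" "p < length q"
    "p < min a b \<or> max a b < p"
  shows "rch E (V - {q ! p}) (q ! a) (q ! b)"
proof -
  have "distinct q" using assms(1) by (simp add: ispath_def)
  then have "\<forall>k. min a b \<le> k \<and> k \<le> max a b \<longrightarrow> q ! k \<notin> {q ! p}"
    using assms by (auto simp: nth_eq_iff_index_eq)
  then show ?thesis using qrch assms by blast
qed


lemma cyc_nb:
  assumes qp: "ispath q" and lq: "length q = Suc h" and ih: "i + 2 \<le> h" and xc: "E (q ! h) (q ! i)"
    and deg2: "\<forall>k. i < k \<and> k \<le> h \<longrightarrow> (\<forall>w. E (q ! k) w \<longrightarrow> w = q ! (k - 1) \<or> w = q ! (if k = h then i else Suc k))"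
    and k: "i < k" "k \<le> h"
  shows "E (q ! k) w \<longleftrightarrow> w = q ! (k - 1) \<or> w = q ! (if k = h then i else Suc k)"
proof
  assume "E (q ! k) w" then show "w = q ! (k - 1) \<or> w = q ! (if k = h then i else Suc k)" using deg2 k by blast
next
  assume w: "w = q ! (k - 1) \<or> w = q ! (if k = h then i else Suc k)"
  have e1: "E (q ! (k - 1)) (q ! k)"
  proof -
    have "Suc (k - 1) < length q" using k lq by simp
    then have "E (q ! (k - 1)) (q ! Suc (k - 1))" using qp by (simp add: ispath_def)
    then show ?thesis using k by simp
  qed
  have e2: "k < h \<Longrightarrow> E (q ! k) (q ! Suc k)" using qp lq by (auto simp: ispath_def)
  show "E (q ! k) w" using w e1 e2 xc symE k by (auto split: if_splits)
qed

lemma cyc_induced: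
  assumes qp: "ispath q" and qV: "set q \<subseteq> V" and lq: "length q = Suc h" and ih: "i + 2 \<le> h" and xc: "E (q ! h) (q ! i)"
    and deg2: "\<forall>k. i < k \<and> k \<le> h \<longrightarrow> (\<forall>w. E (q ! k) w \<longrightarrow> w = q ! (k - 1) \<or> w = q ! (if k = h then i else Suc k))"
  shows "induced_cycle_set V E (set (drop i q))"
proof -
  define n where "n = Suc (h - i)"
  have dq: "distinct q" using qp by (simp add: ispath_def)
  have qinj: "\<And>a b. a \<le> h \<Longrightarrow> b \<le> h \<Longrightarrow> q ! a = q ! b \<longleftrightarrow> a = b"
    using dq lq by (simp add: nth_eq_iff_index_eq)
  have ln: "length (drop i q) = n" using lq ih by (simp add: n_def)
  have nth: "\<And>a. drop i q ! a = q ! (i + a)" using ih lq by simp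
  have n3: "n \<ge> 3" using ih by (simp add: n_def)
  have adj1: "E (q ! (i + a)) (q ! (i + b)) \<longleftrightarrow> (b = Suc a mod n \<or> a = Suc b mod n)"
    if ab: "0 < a" "a < n" "b < n" for a b
  proof -
    have "E (q ! (i + a)) (q ! (i + b)) \<longleftrightarrow> q ! (i + b) = q ! (i + a - 1) \<or> q ! (i + b) = q ! (if i + a = h then i else Suc (i + a))"
      using cyc_nb[OF qp lq ih xc deg2, of "i + a" "q ! (i + b)"] ab by (simp add: n_def)
    also have "\<dots> \<longleftrightarrow> i + b = i + a - 1 \<or> i + b = (if i + a = h then i else Suc (i + a))"
      using qinj ab by (simp add: n_def)
    also have "\<dots> \<longleftrightarrow> (b = Suc a mod n \<or> a = Suc b mod n)"
    proof -
      have "Suc a mod n = (if a = h - i then 0 else Suc a)" using ab by (simp add: n_def)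
      moreover have "Suc b mod n = (if b = h - i then 0 else Suc b)" using ab by (simp add: n_def)
      ultimately show ?thesis using ab ih by (auto simp: n_def)
    qed
    finally show ?thesis .
  qed
  have adj: "E (drop i q ! a) (drop i q ! b) \<longleftrightarrow> (b = Suc a mod n \<or> a = Suc b mod n)"
    if ab: "a < n" "b < n" for a b
  proof (cases "0 < a")
    case True then show ?thesis using adj1[of a b] ab nth by simp
  next
    case False
    then have a0: "a = 0" by simp
    show ?thesis
    proof (cases "0 < b")
      case True
      then have "E (q ! (i + b)) (q ! (i + a)) \<longleftrightarrow> (a = Suc b mod n \<or> b = Suc a mod n)" using adj1[of b a] ab by simp
      moreover have "E (q ! (i + b)) (q ! (i + a)) \<longleftrightarrow> E (q ! (i + a)) (q ! (i + b))" by (metis symE)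
      ultimately show ?thesis using nth by auto
    next
      case False
      then have "b = 0" by simp
      moreover have "Suc 0 mod n = 1" using n3 by simp
      ultimately show ?thesis using a0 nth irr by simp
    qed
  qed
  show ?thesis unfolding induced_cycle_set_def
  proof (intro conjI exI[of _ "drop i q"])
    show "set (drop i q) \<subseteq> V" using qV by (meson in_mono set_drop_subset subsetI)
    show "distinct (drop i q)" using dq by simp
    show "3 \<le> length (drop i q)" using ln n3 by simp
    show "set (drop i q) = set (drop i q)" ..
    show "\<forall>a<length (drop i q). \<forall>b<length (drop i q). E (drop i q ! a) (drop i q ! b) \<longleftrightarrow> (b = Suc a mod length (drop i q) \<or> a = Suc b mod length (drop i q))"
      using adj ln by simp
  qed
qed

lemma pendant_good:
  assumes qp: "ispath q" and qV: "set q \<subseteq> V" and lq: "length q = Suc h" and ih: "i + 2 \<le> h" and xc: "E (q ! h) (q ! i)"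
    and deg2: "\<forall>k. i < k \<and> k \<le> h \<longrightarrow> (\<forall>w. E (q ! k) w \<longrightarrow> w = q ! (k - 1) \<or> w = q ! (if k = h then i else Suc k))"
  shows "\<exists>S T. good S T"
proof -
  define S where "S = set (drop i q)"
  have dq: "distinct q" using qp by (simp add: ispath_def)
  have qinj: "\<And>a b. a \<le> h \<Longrightarrow> b \<le> h \<Longrightarrow> q ! a = q ! b \<longleftrightarrow> a = b"
    using dq lq by (simp add: nth_eq_iff_index_eq)
  have qE: "\<And>k. k < h \<Longrightarrow> E (q ! k) (q ! Suc k)" using qp lq by (simp add: ispath_def)
  have qVk: "\<And>k. k \<le> h \<Longrightarrow> q ! k \<in> V" using qV lq by (metis le_imp_less_Suc nth_mem subsetD)
  have Smem: "v \<in> S \<longleftrightarrow> (\<exists>k. i \<le> k \<and> k \<le> h \<and> v = q ! k)" for v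
  proof
    assume "v \<in> S"
    then obtain a where "a < length (drop i q)" "v = drop i q ! a" unfolding S_def by (auto simp: in_set_conv_nth)
    then show "\<exists>k. i \<le> k \<and> k \<le> h \<and> v = q ! k" using lq ih by (intro exI[of _ "i + a"]) auto
  next
    assume "\<exists>k. i \<le> k \<and> k \<le> h \<and> v = q ! k"
    then obtain k where k: "i \<le> k" "k \<le> h" "v = q ! k" by blast
    then have "drop i q ! (k - i) = v" "k - i < length (drop i q)" using lq by auto
    then show "v \<in> S" unfolding S_def by (metis nth_mem)
  qed
  have qS: "\<And>k. i \<le> k \<Longrightarrow> k \<le> h \<Longrightarrow> q ! k \<in> S" by (simp only: Smem) blast
  have SV: "S \<subseteq> V" using qVk by (auto simp: Smem)
  define T where "T = insert (q ! i) ((\<lambda>t. q ! (i + 3 * t)) ` {1..(h - i) div 3})"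
  have Tmem: "q ! k \<in> T \<longleftrightarrow> (k - i) mod 3 = 0" if k: "i \<le> k" "k \<le> h" for k
  proof
    assume "q ! k \<in> T"
    then consider "q ! k = q ! i" | t where "1 \<le> t" "t \<le> (h - i) div 3" "q ! k = q ! (i + 3 * t)"
      unfolding T_def by auto
    then show "(k - i) mod 3 = 0"
    proof cases
      case 1 then show ?thesis using qinj k ih by auto
    next
      case 2
      then have "i + 3 * t \<le> h" by linarith
      then have "k = i + 3 * t" using 2 qinj k by simp
      then show ?thesis by simp
    qed
  next
    assume m: "(k - i) mod 3 = 0"
    show "q ! k \<in> T"
    proof (cases "k = i")
      case True then show ?thesis by (simp add: T_def)
    next
      case False
      define t where "t = (k - i) div 3"
      have "k = i + 3 * t" using ar1[of i k] m k by (simp add: t_def)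
      moreover have "1 \<le> t" using False \<open>k = i + 3 * t\<close> by (cases t) auto
      moreover have "t \<le> (h - i) div 3" unfolding t_def using k by (intro div_le_mono) simp
      ultimately show ?thesis by (auto simp: T_def)
    qed
  qed
  have TS: "T \<subseteq> S"
  proof
    fix v assume "v \<in> T"
    then consider "v = q ! i" | t where "1 \<le> t" "t \<le> (h - i) div 3" "v = q ! (i + 3 * t)"
      unfolding T_def by auto
    then show "v \<in> S"
    proof cases
      case 1 then show ?thesis using qS ih by simp
    next
      case 2
      then have "i + 3 * t \<le> h" by linarith
      then show ?thesis using qS 2 by simp
    qed
  qed
  have cardT: "card T \<le> 1 + (h - i) div 3"
  proof -
    have "card ((\<lambda>t. q ! (i + 3 * t)) ` {1..(h - i) div 3}) \<le> (h - i) div 3"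
      using card_image_le[of "{1..(h - i) div 3}" "\<lambda>t. q ! (i + 3 * t)"] by simp
    moreover have "card T \<le> Suc (card ((\<lambda>t. q ! (i + 3 * t)) ` {1..(h - i) div 3}))"
      unfolding T_def by (simp add: card_insert_if)
    ultimately show ?thesis by simp
  qed
  have nbk: "\<And>k w. i < k \<Longrightarrow> k \<le> h \<Longrightarrow> E (q ! k) w \<longleftrightarrow> w = q ! (k - 1) \<or> w = q ! (if k = h then i else Suc k)"
    using cyc_nb[OF qp lq ih xc deg2] by blast
  have STcl: "\<forall>v\<in>S - T. \<forall>w. E v w \<longrightarrow> w \<in> S"
  proof (intro ballI allI impI)
    fix v w assume v: "v \<in> S - T" and vw: "E v w"
    obtain k where k: "i \<le> k" "k \<le> h" "v = q ! k" using v by (auto simp: Smem)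
    have "k \<noteq> i" using v k by (auto simp: T_def)
    then have "w = q ! (k - 1) \<or> w = q ! (if k = h then i else Suc k)" using nbk k vw by auto
    then show "w \<in> S" using qS k \<open>k \<noteq> i\<close> by (auto split: if_splits)
  qed
  have STd: "\<forall>v\<in>S - T. card {w \<in> S - T. E v w} \<le> 1"
  proof
    fix v assume v: "v \<in> S - T"
    obtain k where k: "i \<le> k" "k \<le> h" "v = q ! k" using v by (auto simp: Smem)
    have ki: "i < k" using v k by (auto simp: T_def le_less)
    have m: "(k - i) mod 3 \<noteq> 0" using Tmem k v by blast
    have sub: "{w \<in> S - T. E v w} \<subseteq> {q ! (k - 1), q ! (if k = h then i else Suc k)} - T"
      using nbk ki k by auto
    have "q ! (k - 1) \<in> T \<or> q ! (if k = h then i else Suc k) \<in> T"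
    proof (cases "(k - i) mod 3 = 1")
      case True
      have "k - 1 - i = k - i - 1" by simp
      then have "(k - 1 - i) mod 3 = 0" using ar2[of "k - i"] True by simp
      then show ?thesis using Tmem[of "k - 1"] ki k by auto
    next
      case False
      have "(k - i) mod 3 < 3" by simp
      then have m2: "(k - i) mod 3 = 2" using m False by linarith
      show ?thesis
      proof (cases "k = h")
        case True then show ?thesis by (simp add: T_def)
      next
        case False
        have "Suc k - i = Suc (k - i)" using ki by (simp add: Suc_diff_le)
        then have "(Suc k - i) mod 3 = 0" using ar3[OF m2] by simp
        then show ?thesis using Tmem[of "Suc k"] ki k False by auto
      qed
    qed
    then have "{w \<in> S - T. E v w} \<subseteq> {q ! (if k = h then i else Suc k)} \<or> {w \<in> S - T. E v w} \<subseteq> {q ! (k - 1)}"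
      using sub by blast
    then show "card {w \<in> S - T. E v w} \<le> 1"
      by (metis card_le1)
  qed
  have Nsub: "Nout S \<subseteq> nb E (q ! i) - {q ! (Suc i), q ! h}"
  proof
    fix y assume "y \<in> Nout S"
    then obtain s where y: "y \<in> V" "y \<notin> S" "s \<in> S" "E y s" by (auto simp: Nout_def)
    obtain k where k: "i \<le> k" "k \<le> h" "s = q ! k" using y(3) by (auto simp: Smem)
    have "k = i"
    proof (rule ccontr)
      assume "k \<noteq> i"
      then have "E (q ! k) y" using y(4) k symE by simp
      then have "y = q ! (k - 1) \<or> y = q ! (if k = h then i else Suc k)" using nbk[of k y] k \<open>k \<noteq> i\<close> by simp
      then have "y \<in> S" using qS k \<open>k \<noteq> i\<close> by (auto split: if_splits)
      then show False using y by simp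
    qed
    then have "y \<in> nb E (q ! i)" using y k symE by (auto simp: nb_def)
    moreover have "y \<noteq> q ! (Suc i)" "y \<noteq> q ! h" using y qS ih by auto
    ultimately show "y \<in> nb E (q ! i) - {q ! (Suc i), q ! h}" by auto
  qed
  have nb2: "q ! (Suc i) \<in> nb E (q ! i)" "q ! h \<in> nb E (q ! i)" "q ! (Suc i) \<noteq> q ! h"
    using qE[of i] ih xc symE qinj[of "Suc i" h] by (auto simp: nb_def)
  have cardN: "card (cls S ` Nout S) + 2 \<le> card (nb E (q ! i))"
  proof -
    have "card (cls S ` Nout S) \<le> card (Nout S)" using fin_Nout by (rule card_image_le)
    also have "\<dots> \<le> card (nb E (q ! i) - {q ! (Suc i), q ! h})" using Nsub fin_nb by (intro card_mono) auto
    also have "\<dots> = card (nb E (q ! i)) - 2" using nb2 fin_nb by (simp add: card_Diff_subset)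
    finally have "card (cls S ` Nout S) \<le> card (nb E (q ! i)) - 2" .
    moreover have "card {q ! (Suc i), q ! h} \<le> card (nb E (q ! i))" using nb2 fin_nb by (intro card_mono) auto
    ultimately show ?thesis using nb2 by simp
  qed
  define P where "P = (\<lambda>k. {q ! k, q ! Suc k}) ` {Suc i..<h}"
  have cardP: "card P = h - Suc i"
  proof -
    have "inj_on (\<lambda>k. {q ! k, q ! Suc k}) {Suc i..<h}"
    proof (rule inj_onI)
      fix a b assume ab: "a \<in> {Suc i..<h}" "b \<in> {Suc i..<h}" "{q ! a, q ! Suc a} = {q ! b, q ! Suc b}"
      then have "(q ! a = q ! b \<and> q ! Suc a = q ! Suc b) \<or> (q ! a = q ! Suc b \<and> q ! Suc a = q ! b)"
        by (simp add: doubleton_eq_iff)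
      then show "a = b" using qinj ab by auto
    qed
    then show ?thesis unfolding P_def by (simp add: card_image)
  qed
  have eSb: "card (nb E (q ! i)) + card P \<le> eS S"
  proof (rule eS_star)
    show "q ! i \<in> S" using qS ih by simp
    show "P \<subseteq> {e \<in> edges E. e \<inter> S \<noteq> {}}"
    proof
      fix e assume "e \<in> P"
      then obtain k where k: "Suc i \<le> k" "k < h" "e = {q ! k, q ! Suc k}" unfolding P_def by auto
      then have "e \<in> edges E" using qE[of k] by (auto simp: edges_def)
      moreover have "q ! k \<in> S" using qS k by simp
      ultimately show "e \<in> {e \<in> edges E. e \<inter> S \<noteq> {}}" using k by auto
    qed
    show "\<forall>e\<in>P. q ! i \<notin> e" unfolding P_def using qinj ih by auto
  qed
  have crd: "3 * ((h - i) div 3) + 1 \<le> (h - i) + credit S"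
  proof (cases "(h - i) mod 3 = 0")
    case True
    have ics: "induced_cycle_set V E S" unfolding S_def by (rule cyc_induced[OF qp qV lq ih xc deg2])
    have "card S = Suc (h - i)" unfolding S_def using dq lq ih by (simp add: distinct_card)
    then have "card S mod 3 = 1" using True by (simp add: mod_Suc)
    then have "credit S = 1" using ics unfolding credit_def by auto
    moreover have "3 * ((h - i) div 3) = h - i" using True by (metis ar1 add_diff_cancel_left' le_add2 diff_zero)
    ultimately show ?thesis by simp
  next
    case False
    have "3 * ((h - i) div 3) + (h - i) mod 3 = h - i" by simp
    then show ?thesis using False by linarith
  qed
  have "good S T"
  proof (rule mk_good)
    show "S \<subseteq> V" by (rule SV)
    show "S \<noteq> {}" using qS[of i] ih by auto
    show "T \<subseteq> S" by (rule TS)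
    show "\<forall>v\<in>S - T. \<forall>u. E v u \<longrightarrow> u \<in> S" by (rule STcl)
    show "\<forall>v\<in>S - T. card {u \<in> S - T. E v u} \<le> 1" by (rule STd)
    show "3 * card T + card (cls S ` Nout S) \<le> eS S + 1 + credit S"
      using cardT cardN eSb cardP crd ih by linarith
  qed
  then show ?thesis by blast
qed

lemma ispath_snoc: "ispath q \<Longrightarrow> q \<noteq> [] \<Longrightarrow> y \<notin> set q \<Longrightarrow> E (last q) y \<Longrightarrow> ispath (q @ [y])"
  unfolding ispath_def
proof (intro conjI allI impI)
  assume a: "distinct q \<and> (\<forall>p. Suc p < length q \<longrightarrow> E (q ! p) (q ! Suc p))" "q \<noteq> []" "y \<notin> set q" "E (last q) y"
  then show "distinct (q @ [y])" by simp
  fix p assume p: "Suc p < length (q @ [y])"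
  show "E ((q @ [y]) ! p) ((q @ [y]) ! Suc p)"
  proof (cases "Suc p < length q")
    case True then show ?thesis using a by (simp add: nth_append)
  next
    case False
    then have "p = length q - 1" using p by simp
    then show ?thesis using a False by (simp add: nth_append last_conv_nth)
  qed
qed

lemma ispath_take: "ispath q \<Longrightarrow> ispath (take k q)"
  unfolding ispath_def by auto

lemma Nout_card: "Nout S \<subseteq> B \<Longrightarrow> finite B \<Longrightarrow> card (cls S ` Nout S) \<le> card B"
  by (meson card_image_le card_mono fin_Nout le_trans)

lemma nb_iff: "u \<in> nb E v \<longleftrightarrow> E v u" by (simp add: nb_def)

definition hyp :: "'a \<Rightarrow> 'a set \<Rightarrow> bool" where
  "hyp r W \<longleftrightarrow> r \<in> V \<and> W \<subseteq> V \<and> r \<notin> W \<and> (\<forall>u\<in>W. \<forall>v. E u v \<longrightarrow> v \<in> W \<or> v = r)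
     \<and> (W = V - {r} \<or> ((\<exists>w\<in>W. E r w) \<and> (\<exists>y z. y \<noteq> z \<and> E r y \<and> E r z \<and> y \<notin> W \<and> z \<notin> W
          \<and> rch E (V - insert r W) y z)))"

lemma lemB: "hyp r W \<Longrightarrow> \<exists>S T. good S T"
proof (induction "card W" arbitrary: r W rule: less_induct)
  case less
  have rV: "r \<in> V" and WV: "W \<subseteq> V" and rW: "r \<notin> W" and clW: "\<forall>u\<in>W. \<forall>v. E u v \<longrightarrow> v \<in> W \<or> v = r"
    and alt: "W = V - {r} \<or> ((\<exists>w\<in>W. E r w) \<and> (\<exists>y z. y \<noteq> z \<and> E r y \<and> E r z \<and> y \<notin> W \<and> z \<notin> W
          \<and> rch E (V - insert r W) y z))"
    using less.prems unfolding hyp_def by blast+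
  define PS where "PS = {q. q \<noteq> [] \<and> q ! 0 = r \<and> set q \<subseteq> insert r W \<and> ispath q}"
  have finPS: "finite PS"
  proof -
    have "PS \<subseteq> {xs. set xs \<subseteq> insert r W \<and> distinct xs}" by (auto simp: PS_def ispath_def)
    moreover have "finite (insert r W)" using WV finV finite_subset by auto
    ultimately show ?thesis using finite_subset_distinct finite_subset by blast
  qed
  have "[r] \<in> PS" by (simp add: PS_def ispath_def)
  then have ne: "length ` PS \<noteq> {}" by blast
  obtain q where qPS: "q \<in> PS" and qmax: "\<And>q'. q' \<in> PS \<Longrightarrow> length q' \<le> length q"
  proof -
    have "Max (length ` PS) \<in> length ` PS" using finPS ne by (intro Max_in) auto
    then obtain q where "q \<in> PS" "length q = Max (length ` PS)" by auto
    moreover have "\<And>q'. q' \<in> PS \<Longrightarrow> length q' \<le> Max (length ` PS)" using finPS by auto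
    ultimately show ?thesis using that by metis
  qed
  define h where "h = length q - 1"
  have lq: "length q = Suc h" using qPS by (simp add: PS_def h_def)
  have q0: "q ! 0 = r" and qsub: "set q \<subseteq> insert r W" and qp: "ispath q" using qPS by (auto simp: PS_def)
  have dq: "distinct q" using qp by (simp add: ispath_def)
  have qE: "\<And>k. k < h \<Longrightarrow> E (q ! k) (q ! Suc k)" using qp lq by (simp add: ispath_def)
  have qV: "set q \<subseteq> V" using qsub rV WV by auto
  have qW: "\<And>k. 0 < k \<Longrightarrow> k \<le> h \<Longrightarrow> q ! k \<in> W"
  proof -
    fix k assume k: "0 < k" "k \<le> h"
    have "q ! k \<in> insert r W" using qsub lq k by (metis in_mono le_imp_less_Suc nth_mem)
    moreover have "q ! k \<noteq> r" using dq q0 k lq by (metis nth_eq_iff_index_eq le_imp_less_Suc not_less0 not_gr0 zero_less_Suc)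
    ultimately show "q ! k \<in> W" by blast
  qed
  have qinj: "\<And>a b. a \<le> h \<Longrightarrow> b \<le> h \<Longrightarrow> q ! a = q ! b \<longleftrightarrow> a = b"
    using dq lq by (simp add: nth_eq_iff_index_eq)
  have qset: "\<And>v. v \<in> set q \<longleftrightarrow> (\<exists>k\<le>h. v = q ! k)"
    using lq by (auto simp: in_set_conv_nth less_Suc_eq_le)
  show ?case
  proof (cases "h = 0")
    case True
    have nonb: "\<not> E r v" for v
    proof
      assume rv: "E r v"
      have "v \<noteq> r" using rv neq by blast
      moreover have "v \<in> V" using rv inV2 by blast
      ultimately have vW: "v \<in> W"
      proof -
        assume "v \<noteq> r" "v \<in> V"
        show "v \<in> W"
        proof (cases "W = V - {r}")
          case True then show ?thesis using \<open>v \<noteq> r\<close> \<open>v \<in> V\<close> by blast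
        next
          case False
          then obtain w where "w \<in> W" "E r w" using alt by blast
          have "[r, w] \<in> PS" using \<open>w \<in> W\<close> \<open>E r w\<close> rW by (auto simp: PS_def ispath_def)
          then show ?thesis using qmax lq True by fastforce
        qed
      qed
      have "[r, v] \<in> PS" using vW rv rW by (auto simp: PS_def ispath_def)
      then show False using qmax lq True by fastforce
    qed
    have "good {r} {}"
    proof (rule mk_good)
      have "Nout {r} = {}" using nonb symE by (auto simp: Nout_def)
      then show "3 * card {} + card (cls {r} ` Nout {r}) \<le> eS {r} + 1 + credit {r}" by simp
    qed (use rV nonb in auto)
    then show ?thesis by blast
  next
    case False
    then have hpos: "0 < h" by simp
    define x where "x = q ! h"
    define u where "u = q ! (h - 1)"
    have xW: "x \<in> W" using qW hpos by (simp add: x_def)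
    have xV: "x \<in> V" using xW WV by auto
    have ux: "E u x" using qE[of "h - 1"] hpos by (simp add: u_def x_def)
    have "q \<noteq> []" using lq by auto
    then have lastq: "last q = x" using lq by (simp add: last_conv_nth x_def)
    have ext: "y \<in> set q" if xy: "E x y" for y
    proof (rule ccontr)
      assume ny: "y \<notin> set q"
      have "y \<in> insert r W" using clW xW xy by blast
      then have "q @ [y] \<in> PS" using qPS ny xy lastq ispath_snoc[of q y] lq by (auto simp: PS_def nth_append)
      then show False using qmax[of "q @ [y]"] by simp
    qed
    have nbxq: "nb E x \<subseteq> set q" using ext by (auto simp: nb_def)
    have ux': "u \<in> nb E x" using ux symE by (simp add: nb_def)
    have "card (nb E x) \<ge> 1" using ux' fin_nb by (metis One_nat_def Suc_leI card_gt_0_iff empty_iff)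
    then consider "card (nb E x) \<ge> 3" | "card (nb E x) = 1" | "card (nb E x) = 2" by linarith
    then show ?thesis
    proof cases
      case 1
      have "good {x} {x}"
      proof (rule mk_good)
        have "card (cls {x} ` Nout {x}) \<le> card (cls {x} ` nb E x)"
          using fin_nb by (intro Nout_le) (auto simp: Nout_def nb_def intro: symE)
        also have "\<dots> \<le> 1"
        proof (rule card_img_const[OF fin_nb])
          fix y assume "y \<in> nb E x"
          then obtain k where k: "k \<le> h" "y = q ! k" using nbxq qset by blast
          have "k \<noteq> h" using k \<open>y \<in> nb E x\<close> irr by (auto simp: nb_def x_def)
          then have "rch E (V - {q ! h}) (q ! k) (q ! 0)" using qrch1[OF qp qV, of k 0 h] k lq by simp
          then show "cls {x} y = cls {x} r" using cls_eq k q0 by (simp add: x_def)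
        qed
        finally have "card (cls {x} ` Nout {x}) \<le> 1" .
        moreover have "card (nb E x) \<le> eS {x}" by (rule eS_deg) simp
        ultimately show "3 * card {x} + card (cls {x} ` Nout {x}) \<le> eS {x} + 1 + credit {x}"
          using 1 by simp
      qed (use xV in auto)
      then show ?thesis by blast
    next
      case 2
      have nbx: "nb E x = {u}" using 2 ux' by (metis card_1_singletonE singletonD)
      have xnb: "E x w \<longleftrightarrow> w = u" for w using nbx by (auto simp: nb_def)
      show ?thesis
      proof (cases "h = 1")
        case True
        have ur: "u = r" using True q0 by (simp add: u_def)
        have xr: "x \<noteq> r" using xW rW by auto
        show ?thesis
        proof (cases "W = V - {r}")
          case True
          have leaves: "nb E z = {r}" if rz: "E r z" for z
          proof
            show "{r} \<subseteq> nb E z" using rz symE by (simp add: nb_def)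
            show "nb E z \<subseteq> {r}"
            proof
              fix v assume "v \<in> nb E z"
              then have zv: "E z v" by (simp add: nb_def)
              show "v \<in> {r}"
              proof (rule ccontr)
                assume "v \<notin> {r}"
                then have vW: "v \<in> W" using zv inV2 True by auto
                have zW: "z \<in> W" using rz inV2 True neq by auto
                have "[r, z, v] \<in> PS" using vW zW rz zv rW neq[OF rz] neq[OF zv] \<open>v \<notin> {r}\<close>
                  by (auto simp: PS_def ispath_def less_Suc_eq nth_Cons')
                then show False using qmax[of "[r, z, v]"] lq \<open>h = 1\<close> by simp
              qed
            qed
          qed
          have xnr: "x \<in> nb E r" using ux ur by (simp add: nb_def)
          show ?thesis
          proof (cases "nb E r = {x}")
            case True
            have rnb: "E r w \<longleftrightarrow> w = x" for w using True by (auto simp: nb_def)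
            have "good {r, x} {}"
            proof (rule mk_good)
              have "Nout {r, x} = {}" using rnb xnb ur symE by (auto simp: Nout_def)
              then show "3 * card {} + card (cls {r, x} ` Nout {r, x}) \<le> eS {r, x} + 1 + credit {r, x}" by simp
              show "\<forall>v\<in>{r, x} - {}. card {u \<in> {r, x} - {}. E v u} \<le> 1"
              proof
                fix v assume "v \<in> {r, x} - {}"
                then have "{u \<in> {r, x} - {}. E v u} \<subseteq> {if v = r then x else r}" using rnb xnb ur by auto
                then show "card {u \<in> {r, x} - {}. E v u} \<le> 1" by (rule card_le1)
              qed
              show "{r, x} \<subseteq> V" using rV xV by simp
              show "{r, x} \<noteq> {}" by simp
              show "{} \<subseteq> {r, x}" by simp
              show "\<forall>v\<in>{r, x} - {}. \<forall>u. E v u \<longrightarrow> u \<in> {r, x}" using rnb xnb ur by simp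
            qed
            then show ?thesis by blast
          next
            case False
            then obtain z where z: "E r z" "z \<noteq> x" using xnr by (auto simp: nb_def)
            have znb: "E z w \<longleftrightarrow> w = r" for w using leaves[OF z(1)] by (auto simp: nb_def)
            have zV: "z \<in> V" using z inV2 by auto
            have "good {x, z, r} {r}"
            proof (rule mk_good)
              have "Nout {x, z, r} \<subseteq> nb E r - {x, z}" using xnb znb ur symE by (auto simp: Nout_def nb_def)
              then have "card (cls {x, z, r} ` Nout {x, z, r}) \<le> card (nb E r - {x, z})"
                using fin_nb by (intro Nout_card) auto
              also have "\<dots> = card (nb E r) - 2" using xnr z fin_nb by (simp add: card_Diff_subset nb_def)
              finally have a: "card (cls {x, z, r} ` Nout {x, z, r}) \<le> card (nb E r) - 2" .
              have "card {x, z} \<le> card (nb E r)" using xnr z fin_nb by (intro card_mono) (auto simp: nb_def)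
              moreover have "card (nb E r) \<le> eS {x, z, r}" by (rule eS_deg) simp
              ultimately show "3 * card {r} + card (cls {x, z, r} ` Nout {x, z, r}) \<le> eS {x, z, r} + 1 + credit {x, z, r}"
                using a z by simp
              show "\<forall>v\<in>{x, z, r} - {r}. card {u \<in> {x, z, r} - {r}. E v u} \<le> 1"
              proof
                fix v assume "v \<in> {x, z, r} - {r}"
                then have e: "{u \<in> {x, z, r} - {r}. E v u} = {}" using xnb znb ur xr z by auto
                show "card {u \<in> {x, z, r} - {r}. E v u} \<le> 1" unfolding e by simp
              qed
              show "{x, z, r} \<subseteq> V" using rV xV zV by simp
              show "{x, z, r} \<noteq> {}" by simp
              show "{r} \<subseteq> {x, z, r}" by simp
              show "\<forall>v\<in>{x, z, r} - {r}. \<forall>u. E v u \<longrightarrow> u \<in> {x, z, r}" using xnb znb ur by auto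
            qed
            then show ?thesis by blast
          qed
        next
          case False
          then obtain y z where yz: "y \<noteq> z" "E r y" "E r z" "y \<notin> W" "z \<notin> W" "rch E (V - insert r W) y z"
            using alt by blast
          have xnr: "x \<in> nb E r" using ux ur by (simp add: nb_def)
          have "good {x, r} {r}"
          proof (rule mk_good)
            have "Nout {x, r} \<subseteq> nb E r - {x}" using xnb ur symE by (auto simp: Nout_def nb_def)
            then have "card (cls {x, r} ` Nout {x, r}) \<le> card (cls {x, r} ` (nb E r - {x}))"
              by (intro Nout_le) (use fin_nb in auto)
            also have "\<dots> + 1 \<le> card (nb E r - {x})"
            proof (rule card_img_le1)
              show "finite (nb E r - {x})" using fin_nb by auto
              show "y \<in> nb E r - {x}" "z \<in> nb E r - {x}" using yz xW by (auto simp: nb_def)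
              show "y \<noteq> z" by fact
              have "V - insert r W \<subseteq> V - {x, r}" using xW by auto
              then show "cls {x, r} y = cls {x, r} z" using yz(6) rch_mono cls_eq by blast
            qed
            finally have a: "card (cls {x, r} ` Nout {x, r}) + 1 \<le> card (nb E r - {x})" by simp
            have "card (nb E r - {x}) = card (nb E r) - 1" using xnr fin_nb by simp
            moreover have "card (nb E r) \<le> eS {x, r}" by (rule eS_deg) simp
            ultimately show "3 * card {r} + card (cls {x, r} ` Nout {x, r}) \<le> eS {x, r} + 1 + credit {x, r}"
              using a xr by simp
            show "{x, r} \<subseteq> V" using rV xV by simp
            show "{x, r} \<noteq> {}" by simp
            show "{r} \<subseteq> {x, r}" by simp
            show "\<forall>v\<in>{x, r} - {r}. \<forall>u. E v u \<longrightarrow> u \<in> {x, r}" using xnb ur by auto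
            show "\<forall>v\<in>{x, r} - {r}. card {u \<in> {x, r} - {r}. E v u} \<le> 1"
            proof
              fix v assume "v \<in> {x, r} - {r}"
              have "{u \<in> {x, r} - {r}. E v u} \<subseteq> {x}" by auto
              then show "card {u \<in> {x, r} - {r}. E v u} \<le> 1" by (rule card_le1)
            qed
          qed
          then show ?thesis by blast
        qed
      next
        case False
        then have h2: "2 \<le> h" using hpos by simp
        define v where "v = q ! (h - 2)"
        have uW: "u \<in> W" using qW[of "h - 1"] h2 by (simp add: u_def)
        have uV: "u \<in> V" using uW WV by auto
        have vu: "E v u" using qE[of "h - 2"] h2 by (simp add: v_def u_def Suc_diff_Suc numeral_2_eq_2)
        have vV: "v \<in> V" using vu inV1 by auto
        have xu: "x \<noteq> u" "x \<noteq> v" "u \<noteq> v" using qinj[of h "h - 1"] qinj[of h "h - 2"] qinj[of "h - 1" "h - 2"] h2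
          by (auto simp: x_def u_def v_def)
        have unb2: "{x, v} \<subseteq> nb E u" using ux vu symE by (auto simp: nb_def)
        show ?thesis
        proof (cases "nb E u = {x, v}")
          case True
          have unb: "E u w \<longleftrightarrow> w = x \<or> w = v" for w using True by (auto simp: nb_def)
          have "good {x, u, v} {v}"
          proof (rule mk_good)
            have "Nout {x, u, v} \<subseteq> nb E v - {u}" using xnb unb symE by (auto simp: Nout_def nb_def)
            then have "card (cls {x, u, v} ` Nout {x, u, v}) \<le> card (nb E v - {u})"
              using fin_nb by (intro Nout_card) auto
            also have "\<dots> = card (nb E v) - 1" using vu fin_nb by (simp add: nb_def)
            finally have a: "card (cls {x, u, v} ` Nout {x, u, v}) \<le> card (nb E v) - 1" .
            have "card (nb E v) + card {{x, u}} \<le> eS {x, u, v}"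
            proof (rule eS_star)
              show "{{x, u}} \<subseteq> {e \<in> edges E. e \<inter> {x, u, v} \<noteq> {}}" using ux
                by (auto simp: edges_def)
              show "\<forall>e\<in>{{x, u}}. v \<notin> e" using xu by auto
            qed simp
            moreover have "card (nb E v) \<ge> 1" using vu fin_nb
              by (metis One_nat_def Suc_leI card_gt_0_iff empty_iff nb_iff)
            ultimately show "3 * card {v} + card (cls {x, u, v} ` Nout {x, u, v}) \<le> eS {x, u, v} + 1 + credit {x, u, v}"
              using a by simp
            show "\<forall>w\<in>{x, u, v} - {v}. card {t \<in> {x, u, v} - {v}. E w t} \<le> 1"
            proof
              fix w assume w: "w \<in> {x, u, v} - {v}"
              have "{t \<in> {x, u, v} - {v}. E w t} \<subseteq> {if w = x then u else x}" using w xnb unb xu irr by auto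
              then show "card {t \<in> {x, u, v} - {v}. E w t} \<le> 1" by (rule card_le1)
            qed
            show "{x, u, v} \<subseteq> V" using xV uV vV by simp
            show "{x, u, v} \<noteq> {}" by simp
            show "{v} \<subseteq> {x, u, v}" by simp
            show "\<forall>w\<in>{x, u, v} - {v}. \<forall>t. E w t \<longrightarrow> t \<in> {x, u, v}" using xnb unb by auto
          qed
          then show ?thesis by blast
        next
          case False
          then obtain w where uw: "E u w" "w \<noteq> x" "w \<noteq> v" using unb2 by (auto simp: nb_def)
          have wV: "w \<in> V" using uw inV2 by auto
          have wu: "w \<noteq> u" using uw neq by auto
          show ?thesis
          proof (cases "w \<notin> set q \<and> nb E w = {u}")
            case True
            have wnb: "E w t \<longleftrightarrow> t = u" for t using True by (auto simp: nb_def)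
            have "good {x, w, u} {u}"
            proof (rule mk_good)
              have "Nout {x, w, u} \<subseteq> nb E u - {x, w}" using xnb wnb symE by (auto simp: Nout_def nb_def)
              then have "card (cls {x, w, u} ` Nout {x, w, u}) \<le> card (nb E u - {x, w})"
                using fin_nb by (intro Nout_card) auto
              also have "\<dots> = card (nb E u) - 2" using ux uw fin_nb symE uw by (simp add: card_Diff_subset nb_def)
              finally have a: "card (cls {x, w, u} ` Nout {x, w, u}) \<le> card (nb E u) - 2" .
              have "card {x, w} \<le> card (nb E u)" using ux uw fin_nb symE by (intro card_mono) (auto simp: nb_def)
              moreover have "card (nb E u) \<le> eS {x, w, u}" by (rule eS_deg) simp
              ultimately show "3 * card {u} + card (cls {x, w, u} ` Nout {x, w, u}) \<le> eS {x, w, u} + 1 + credit {x, w, u}"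
                using a uw by simp
              show "\<forall>t\<in>{x, w, u} - {u}. card {s \<in> {x, w, u} - {u}. E t s} \<le> 1"
              proof
                fix t assume t: "t \<in> {x, w, u} - {u}"
                have "{s \<in> {x, w, u} - {u}. E t s} \<subseteq> {x}" using t xnb wnb by auto
                then show "card {s \<in> {x, w, u} - {u}. E t s} \<le> 1" by (rule card_le1)
              qed
              show "{x, w, u} \<subseteq> V" using xV uV wV by simp
              show "{x, w, u} \<noteq> {}" by simp
              show "{u} \<subseteq> {x, w, u}" by simp
              show "\<forall>t\<in>{x, w, u} - {u}. \<forall>s. E t s \<longrightarrow> s \<in> {x, w, u}" using xnb wnb by auto
            qed
            then show ?thesis by blast
          next
            case False
            have xq: "x \<notin> {q ! j |j. j \<le> h - 2}" "u \<notin> {q ! j |j. j \<le> h - 2}"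
              using qinj h2 by (auto simp: x_def u_def)
            have rchwv: "rch E (V - {x, u}) w v"
            proof (cases "w \<in> set q")
              case True
              then obtain k where k: "k \<le> h" "w = q ! k" using qset by blast
              have "k \<noteq> h" "k \<noteq> h - 1" using k uw wu by (auto simp: x_def u_def)
              then have kh: "k \<le> h - 2" using k by linarith
              have "rch E (V - {x, u}) (q ! k) (q ! (h - 2))"
              proof (rule qrch[OF qp qV])
                show "k < length q" "h - 2 < length q" using kh lq by auto
                show "\<forall>j. min k (h - 2) \<le> j \<and> j \<le> max k (h - 2) \<longrightarrow> q ! j \<notin> {x, u}"
                  using xq kh by (auto simp: max_def)
              qed
              then show ?thesis using k by (simp add: v_def)
            next
              case False
              then have "nb E w \<noteq> {u}" using \<open>\<not> (w \<notin> set q \<and> nb E w = {u})\<close> by blast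
              moreover have "u \<in> nb E w" using uw symE by (simp add: nb_def)
              ultimately obtain y where wy: "E w y" "y \<noteq> u" by (auto simp: nb_def)
              have wW: "w \<in> W"
              proof -
                have "w \<in> W \<or> w = r" using clW uW uw by blast
                moreover have "r \<in> set q" using q0 lq by (metis nth_mem zero_less_Suc)
                ultimately show ?thesis using False by auto
              qed
              have yq: "y \<in> set q"
              proof (rule ccontr)
                assume yn: "y \<notin> set q"
                have yW: "y \<in> insert r W" using clW wW wy by blast
                have tq1: "take h q \<noteq> []" using hpos lq by auto
                have tq: "take h q \<noteq> []" "last (take h q) = u" using tq1 hpos lq
                  by (auto simp: u_def last_conv_nth min_def)
                have p1: "ispath (take h q @ [w])"
                  using ispath_snoc[OF ispath_take[OF qp] tq(1)] tq(2) uw False in_set_takeD by fastforce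
                have "w \<noteq> y" using wy neq by auto
                then have p2: "ispath ((take h q @ [w]) @ [y])"
                  using ispath_snoc[OF p1] wy yn in_set_takeD by fastforce
                have n0: "((take h q @ [w]) @ [y]) ! 0 = r" using tq1 q0 hpos by (simp add: nth_append)
                have "set ((take h q @ [w]) @ [y]) \<subseteq> insert r W"
                  using qsub set_take_subset[of h q] wW yW by auto
                then have "(take h q @ [w]) @ [y] \<in> PS" using p2 n0 by (simp add: PS_def)
                then show False using qmax[of "(take h q @ [w]) @ [y]"] lq hpos by simp
              qed
              then obtain k where k: "k \<le> h" "y = q ! k" using qset by blast
              have "y \<noteq> x" using wy xnb uw wu symE by metis
              then have "k \<noteq> h" "k \<noteq> h - 1" using k wy by (auto simp: x_def u_def)
              then have kh: "k \<le> h - 2" using k by linarith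
              have "rch E (V - {x, u}) (q ! k) (q ! (h - 2))"
              proof (rule qrch[OF qp qV])
                show "k < length q" "h - 2 < length q" using kh lq by auto
                show "\<forall>j. min k (h - 2) \<le> j \<and> j \<le> max k (h - 2) \<longrightarrow> q ! j \<notin> {x, u}"
                  using xq kh by (auto simp: max_def)
              qed
              moreover have "rch E (V - {x, u}) w y"
                using wy wV inV2 False \<open>y \<noteq> x\<close> \<open>y \<noteq> u\<close> qset
                by (intro rch_edge) (auto simp: x_def u_def)
              ultimately show ?thesis using k rch_trans by (simp add: v_def)
            qed
            have "good {x, u} {u}"
            proof (rule mk_good)
              have "Nout {x, u} \<subseteq> nb E u - {x}" using xnb symE by (auto simp: Nout_def nb_def)
              then have "card (cls {x, u} ` Nout {x, u}) \<le> card (cls {x, u} ` (nb E u - {x}))"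
                by (intro Nout_le) (use fin_nb in auto)
              also have "\<dots> + 1 \<le> card (nb E u - {x})"
              proof (rule card_img_le1)
                show "finite (nb E u - {x})" using fin_nb by auto
                show "w \<in> nb E u - {x}" "v \<in> nb E u - {x}" using uw unb2 xu by (auto simp: nb_def)
                show "w \<noteq> v" by (rule uw(3))
                show "cls {x, u} w = cls {x, u} v" using rchwv cls_eq by blast
              qed
              finally have a: "card (cls {x, u} ` Nout {x, u}) + 1 \<le> card (nb E u - {x})" by simp
              have "card (nb E u - {x}) = card (nb E u) - 1" using ux symE fin_nb by (simp add: nb_def)
              moreover have "card (nb E u) \<le> eS {x, u}" by (rule eS_deg) simp
              ultimately show "3 * card {u} + card (cls {x, u} ` Nout {x, u}) \<le> eS {x, u} + 1 + credit {x, u}"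
                using a xu by simp
              show "\<forall>t\<in>{x, u} - {u}. card {s \<in> {x, u} - {u}. E t s} \<le> 1"
              proof
                fix t assume t: "t \<in> {x, u} - {u}"
                have "{s \<in> {x, u} - {u}. E t s} \<subseteq> {x}" by auto
                then show "card {s \<in> {x, u} - {u}. E t s} \<le> 1" by (rule card_le1)
              qed
              show "{x, u} \<subseteq> V" using xV uV by simp
              show "{x, u} \<noteq> {}" by simp
              show "{u} \<subseteq> {x, u}" by simp
              show "\<forall>t\<in>{x, u} - {u}. \<forall>s. E t s \<longrightarrow> s \<in> {x, u}" using xnb by auto
            qed
            then show ?thesis by blast
          qed
        qed
      qed
    next
      case 3
      obtain c where nbx: "nb E x = {u, c}" "c \<noteq> u" using 3 ux'
        by (metis card_2_iff doubleton_eq_iff insertE singletonD)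
      have xcE: "E x c" using nbx by (auto simp: nb_def)
      obtain i where i: "i \<le> h" "c = q ! i" using nbxq nbx qset by blast
      have "i \<noteq> h" using i xcE irr by (auto simp: x_def)
      moreover have "i \<noteq> h - 1" using i nbx by (auto simp: u_def)
      ultimately have ih: "i + 2 \<le> h" using i hpos by linarith
      have xc: "E (q ! h) (q ! i)" using xcE i by (simp add: x_def)
      have xnb: "E x w \<longleftrightarrow> w = u \<or> w = c" for w using nbx by (auto simp: nb_def)
      show ?thesis
      proof (cases "\<exists>p w. i < p \<and> p \<le> h \<and> E (q ! p) w \<and> w \<noteq> q ! (p - 1) \<and> w \<noteq> q ! (if p = h then i else Suc p)")
        case False
        then have deg2: "\<forall>k. i < k \<and> k \<le> h \<longrightarrow> (\<forall>w. E (q ! k) w \<longrightarrow> w = q ! (k - 1) \<or> w = q ! (if k = h then i else Suc k))"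
          by blast
        show ?thesis by (rule pendant_good[OF qp qV lq ih xc deg2])
      next
        case True
        then obtain p w where pw: "i < p" "p \<le> h" "E (q ! p) w" "w \<noteq> q ! (p - 1)" "w \<noteq> q ! (if p = h then i else Suc p)"
          by blast
        have ph: "p < h"
        proof (rule ccontr)
          assume "\<not> p < h"
          then have "p = h" using pw by simp
          then show False using pw xnb i by (auto simp: x_def u_def)
        qed
        define z where "z = q ! p"
        have zW: "z \<in> W" using qW pw by (simp add: z_def)
        have zV: "z \<in> V" using zW WV by auto
        have zw: "E z w" using pw by (simp add: z_def)
        have wV: "w \<in> V" using zw inV2 by auto
        have w1: "w \<noteq> q ! (p - 1)" "w \<noteq> q ! Suc p" using pw ph by auto
        have epz: "E (q ! (p - 1)) z"
        proof -
          have "p - 1 < h" "Suc (p - 1) = p" using pw ph by auto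
          then show ?thesis using qE[of "p - 1"] by (simp add: z_def)
        qed
        have ezp: "E z (q ! (p - 1))" using symE[OF epz] .
        have cyc_conn: "rch E (V - X) (q ! a) (q ! i)"
          if a: "i \<le> a" "a \<le> h" "a \<noteq> p" and X: "\<forall>k. i \<le> k \<and> k \<le> h \<and> k \<noteq> p \<longrightarrow> q ! k \<notin> X" for a X
        proof (cases "a < p")
          case True
          show ?thesis
          proof (rule qrch[OF qp qV])
            show "a < length q" "i < length q" using a ih lq by auto
            show "\<forall>k. min a i \<le> k \<and> k \<le> max a i \<longrightarrow> q ! k \<notin> X" using X a True by (auto simp: min_def max_def)
          qed
        next
          case False
          then have ap: "p < a" using a by simp
          have "rch E (V - X) (q ! a) (q ! h)"
          proof (rule qrch[OF qp qV])
            show "a < length q" "h < length q" using a lq by auto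
            show "\<forall>k. min a h \<le> k \<and> k \<le> max a h \<longrightarrow> q ! k \<notin> X" using X a ap pw by (auto simp: min_def max_def)
          qed
          moreover have "rch E (V - X) (q ! h) (q ! i)"
          proof (rule rch_edge[OF xc])
            show "q ! h \<in> V - X" using X ph pw xV by (auto simp: x_def)
            show "q ! i \<in> V - X" using X pw ih i xcE inV2 by auto
          qed
          ultimately show ?thesis using rch_trans by blast
        qed
        show ?thesis
        proof (cases "\<exists>a. i \<le> a \<and> a \<le> h \<and> a \<noteq> p \<and> rch E (V - {z}) w (q ! a)")
          case True
          then obtain a where a: "i \<le> a" "a \<le> h" "a \<noteq> p" "rch E (V - {z}) w (q ! a)" by blast
          have Xz: "\<forall>k. i \<le> k \<and> k \<le> h \<and> k \<noteq> p \<longrightarrow> q ! k \<notin> {z}" using qinj pw by (auto simp: z_def)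
          have c1: "cls {z} w = cls {z} (q ! i)" using a cyc_conn[OF a(1-3) Xz] rch_trans cls_eq by blast
          have c2: "cls {z} (q ! (p - 1)) = cls {z} (q ! i)" using cyc_conn[OF _ _ _ Xz, of "p - 1"] pw cls_eq by simp
          have c3: "cls {z} (q ! Suc p) = cls {z} (q ! i)" using cyc_conn[OF _ _ _ Xz, of "Suc p"] pw ph cls_eq by simp
          have n1: "q ! (p - 1) \<in> nb E z" using ezp by (simp add: nb_def)
          have n2: "q ! Suc p \<in> nb E z" using qE[of p] ph by (simp add: nb_def z_def)
          have n3: "w \<in> nb E z" using zw by (simp add: nb_def)
          have d: "q ! (p - 1) \<noteq> q ! Suc p" using qinj[of "p - 1" "Suc p"] ph by simp
          have "good {z} {z}"
          proof (rule mk_good)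
            have "card (cls {z} ` Nout {z}) \<le> card (cls {z} ` nb E z)"
              using fin_nb by (intro Nout_le) (auto simp: Nout_def nb_def intro: symE)
            moreover have "card (cls {z} ` nb E z) + 2 \<le> card (nb E z)"
              by (rule card_img_le2[OF fin_nb n3 n1 n2 w1(1) w1(2) d]) (use c1 c2 c3 in auto)
            moreover have "card (nb E z) \<le> eS {z}" by (rule eS_deg) simp
            ultimately show "3 * card {z} + card (cls {z} ` Nout {z}) \<le> eS {z} + 1 + credit {z}" by simp
          qed (use zV in auto)
          then show ?thesis by blast
        next
          case False
          define W' where "W' = {y. rch E (V - {z}) w y}"
          have wW': "w \<in> W'" by (simp add: W'_def rch_refl)
          have wVz: "w \<in> V - {z}" using wV zw neq by auto
          have W'V: "W' \<subseteq> V - {z}"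
          proof
            fix y assume "y \<in> W'"
            then have "rch E (V - {z}) w y" by (simp add: W'_def)
            then show "y \<in> V - {z}" using rch_in wVz by blast
          qed
          have Xz: "\<forall>k. i \<le> k \<and> k \<le> h \<and> k \<noteq> p \<longrightarrow> q ! k \<notin> {z}" using qinj pw by (auto simp: z_def)
          have cycW': "q ! a \<notin> W'" if "i \<le> a" "a \<le> h" "a \<noteq> p" for a
            using False that by (auto simp: W'_def)
          have rW': "r \<notin> W'"
          proof
            assume "r \<in> W'"
            then have "rch E (V - {z}) w r" by (simp add: W'_def)
            moreover have "rch E (V - {z}) (q ! 0) (q ! i)"
              using qrch1[OF qp qV, of 0 i p] lq pw ih by (simp add: z_def)
            ultimately have "rch E (V - {z}) w (q ! i)" using q0 rch_trans by simp
            then have ex: "\<exists>a. i \<le> a \<and> a \<le> h \<and> a \<noteq> p \<and> rch E (V - {z}) w (q ! a)"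
              using pw ih by (intro exI[of _ i]) simp
            show False using False ex by (rule notE)
          qed
          have W'W: "W' \<subseteq> W"
          proof
            fix y assume "y \<in> W'"
            then have "rch E (V - {z}) w y" by (simp add: W'_def)
            then show "y \<in> W"
              unfolding rch_def
            proof (induction rule: rtranclp_induct)
              case base
              have "w \<in> W \<or> w = r" using clW zW zw by blast
              moreover have "w \<noteq> r" using rW' wW' by blast
              ultimately show ?case by blast
            next
              case (step y1 y2)
              have "y2 \<in> W'" using step(1,2) by (auto simp: W'_def rch_def intro: rtranclp.rtrancl_into_rtrancl)
              then have "y2 \<noteq> r" using rW' by blast
              then show ?case using clW step by blast
            qed
          qed
          have zW': "z \<notin> W'" using W'V by blast
          have lt: "card W' < card W"
          proof (rule psubset_card_mono)
            show "finite W" using WV finV finite_subset by blast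
            show "W' \<subset> W" using W'W zW zW' by blast
          qed
          have clW': "\<forall>y\<in>W'. \<forall>v. E y v \<longrightarrow> v \<in> W' \<or> v = z"
          proof (intro ballI allI impI)
            fix y v assume y: "y \<in> W'" and yv: "E y v"
            show "v \<in> W' \<or> v = z"
            proof (cases "v = z")
              case False
              have "y \<in> V - {z}" using y W'V by blast
              moreover have "v \<in> V - {z}" using yv inV2 False by blast
              ultimately have "rch E (V - {z}) y v" by (rule rch_edge[OF yv])
              then show ?thesis using y rch_trans by (auto simp: W'_def)
            qed simp
          qed
          have "hyp z W'"
            unfolding hyp_def
          proof (intro conjI disjI2)
            show "z \<in> V" "W' \<subseteq> V" "z \<notin> W'" using zV W'V zW' by auto
            show "\<forall>y\<in>W'. \<forall>v. E y v \<longrightarrow> v \<in> W' \<or> v = z" by (rule clW')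
            show "\<exists>w\<in>W'. E z w" using wW' zw by blast
            show "\<exists>y z'. y \<noteq> z' \<and> E z y \<and> E z z' \<and> y \<notin> W' \<and> z' \<notin> W' \<and> rch E (V - insert z W') y z'"
            proof (intro exI conjI)
              show "q ! (p - 1) \<noteq> q ! Suc p" using qinj[of "p - 1" "Suc p"] ph by simp
              show "E z (q ! (p - 1))" by (rule ezp)
              show "E z (q ! Suc p)" using qE[of p] ph by (simp add: z_def)
              show "q ! (p - 1) \<notin> W'" using cycW'[of "p - 1"] pw by simp
              show "q ! Suc p \<notin> W'" using cycW'[of "Suc p"] pw ph by simp
              have XW: "\<forall>k. i \<le> k \<and> k \<le> h \<and> k \<noteq> p \<longrightarrow> q ! k \<notin> insert z W'"
                using Xz cycW' by auto
              have "rch E (V - insert z W') (q ! (p - 1)) (q ! i)" using cyc_conn[OF _ _ _ XW, of "p - 1"] pw by simp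
              moreover have "rch E (V - insert z W') (q ! Suc p) (q ! i)" using cyc_conn[OF _ _ _ XW, of "Suc p"] pw ph by simp
              ultimately show "rch E (V - insert z W') (q ! (p - 1)) (q ! Suc p)" using rch_sym rch_trans by blast
            qed
          qed
          then show ?thesis using less.hyps[OF lt] by blast
        qed
      qed
    qed
  qed
qed

end

lemma exists_good: "simple_graph V E \<Longrightarrow> V \<noteq> {} \<Longrightarrow> \<exists>S T. sgraph.good V E S T"
proof -
  assume sg: "simple_graph V E" and ne: "V \<noteq> {}"
  interpret sgraph V E by unfold_locales (rule sg)
  obtain r where r: "r \<in> V" using ne by blast
  have "hyp r (V - {r})" unfolding hyp_def using r inV2 by blast
  then show ?thesis by (rule lemB)
qed

lemma main_nat: "simple_graph V E \<Longrightarrow> 3 * card V \<le> 3 * diss V E + sv V E"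
proof (induction "card V" arbitrary: V E rule: less_induct)
  case less
  show ?case
  proof (cases "V = {}")
    case True then show ?thesis by simp
  next
    case False
    interpret sgraph V E by (unfold_locales) fact
    obtain S T where g: "good S T" using exists_good[OF less.prems False] by blast
    then have ST: "S \<subseteq> V" "S \<noteq> {}" "T \<subseteq> S" "\<forall>v\<in>S - T. \<forall>u. E v u \<longrightarrow> u \<in> S"
      "\<forall>v\<in>S - T. card {u\<in>S - T. E v u} \<le> 1"
      "3 * card T + sv (V - S) (restr E (V - S)) \<le> sv V E" unfolding good_def by auto
    have "V - S \<subset> V" using ST(1,2) by blast
    then have lt: "card (V - S) < card V" using finV by (rule psubset_card_mono[rotated])
    have IH: "3 * card (V - S) \<le> 3 * diss (V - S) (restr E (V - S)) + sv (V - S) (restr E (V - S))"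
      using less.hyps[OF lt sg_sub] .
    have db: "diss (V - S) E + card (S - T) \<le> diss V E" using diss_bound ST by blast
    have c1: "card V = card (V - S) + card S" using ST finV
      by (metis card_Diff_subset finite_subset le_add_diff_inverse2 card_mono)
    have c2: "card S = card T + card (S - T)" using ST finV
      by (metis card_Diff_subset finite_subset le_add_diff_inverse card_mono)
    show ?thesis using IH db c1 c2 ST(6) unfolding diss_restr2 by linarith
  qed
qed

theorem theorem1:
  fixes V :: "'a set" and E :: "'a \<Rightarrow> 'a \<Rightarrow> bool"
  assumes "simple_graph V E"
  shows "real (diss V E) \<ge> real (card V)
           - (real (num_edges E) + real (num_components V E) + real (c1 V E)) / 3"
proof -
  have "3 * card V \<le> 3 * diss V E + sv V E" using main_nat[OF assms] .
  then have "3 * real (card V) \<le> 3 * real (diss V E) + real (num_edges E) + real (num_components V E) + real (c1 V E)"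
    unfolding sv_def by linarith
  then show ?thesis by (simp add: field_simps)
qed

end
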